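(* If a game has a player $n$-transitive and strategy trivial symmetry group, then it is strictly isomorphic to a VNM symmetric game (i.e. there exist a VNM symmetric game $\Gamma'$ and a strict game isomorphism from the given game to $\Gamma'$).
   Context: A (finite normal-form) game $\Gamma=(N,A,u)$ consists of a finite set $N=\{1,\dots,n\}$ of $n\ge2$ players, a finite non-empty strategy set $A_i$ for each $i\in N$ (all of the same cardinality), $A=\times_{i\in N}A_i$, and utility functions $u_i:A\to\mathbb{R}$. A game bijection $g=(\pi;(\tau_i)_{i\in N})$ from $\Gamma_1=(N,A,u)$ to $\Gamma_2=(M,B,v)$ consists of a bijection $\pi:N\to M$ and bijections $\tau_i:A_i\to B_{\pi(i)}$; $g.i=\pi(i)$, $g.s_i=\tau_i(s_i)$, $g.s$ is the profile with $(g.s)_{\pi(i)}=\tau_i(s_i)$. It is a strict game isomorphism if $u_i(s)=v_{g.i}(g.s)$ for all $i,s$; an automorphism of $\Gamma$ is a strict game isomorphism from $\Gamma$ to itself. A symmetry group is a subgroup $G$ of the automorphism group; $G_i=\{g\in G:g.i=i\}$. $G$ is player $n$-transitive if for every $\pi\in S_N$ there is $g\in G$ with $g.i=\pi(i)$ for all $i$; strategy trivial if for every $i$ and every $g\in G_i$, $g.s_i=s_i$ for all $s_i\in A_i$. $\Gamma$ is VNM symmetric if $A_i=A_j$ for all $i,j$ and, for each $\pi\in S_N$, $u_{\pi(i)}(s_1,\dots,s_n)=u_i(s_{\pi(1)},\dots,s_{\pi(n)})$ for all $i\in N$, $(s_1,\dots,s_n)\in A$. *)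

theory Defs
  imports Complex_Main "HOL-Library.FuncSet"
begin

text \<open>Players are 0,...,n-1 (the paper's 1,...,n). A game is given by the number n
of players, strategy sets A i, and utilities u i defined on profiles
(extensional functions on the player set).\<close>

definition profiles :: "nat \<Rightarrow> (nat \<Rightarrow> 's set) \<Rightarrow> (nat \<Rightarrow> 's) set" where
  "profiles n A = PiE {..<n} A"

definition game :: "nat \<Rightarrow> (nat \<Rightarrow> 's set) \<Rightarrow> (nat \<Rightarrow> (nat \<Rightarrow> 's) \<Rightarrow> real) \<Rightarrow> bool" where
  "game n A u \<longleftrightarrow> n \<ge> 2 \<and> (\<forall>i<n. finite (A i) \<and> A i \<noteq> {})
     \<and> (\<forall>i<n. \<forall>j<n. card (A i) = card (A j))"

type_synonym ('s,'t) gbij = "(nat \<Rightarrow> nat) \<times> (nat \<Rightarrow> 's \<Rightarrow> 't)"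

definition game_bijection ::
  "nat \<Rightarrow> (nat \<Rightarrow> 's set) \<Rightarrow> nat \<Rightarrow> (nat \<Rightarrow> 't set) \<Rightarrow> ('s,'t) gbij \<Rightarrow> bool" where
  "game_bijection n A m B g \<longleftrightarrow> bij_betw (fst g) {..<n} {..<m}
     \<and> (\<forall>i<n. bij_betw (snd g i) (A i) (B (fst g i)))"

text \<open>Action on profiles: (g.s)_{pi i} = tau_i (s_i).\<close>

definition gb_apply :: "nat \<Rightarrow> nat \<Rightarrow> ('s,'t) gbij \<Rightarrow> (nat \<Rightarrow> 's) \<Rightarrow> (nat \<Rightarrow> 't)" where
  "gb_apply n m g s = (\<lambda>j\<in>{..<m}. (let i = the_inv_into {..<n} (fst g) j in snd g i (s i)))"

definition strict_iso ::
  "nat \<Rightarrow> (nat \<Rightarrow> 's set) \<Rightarrow> (nat \<Rightarrow> (nat \<Rightarrow> 's) \<Rightarrow> real) \<Rightarrow>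
   nat \<Rightarrow> (nat \<Rightarrow> 't set) \<Rightarrow> (nat \<Rightarrow> (nat \<Rightarrow> 't) \<Rightarrow> real) \<Rightarrow> ('s,'t) gbij \<Rightarrow> bool" where
  "strict_iso n A u m B v g \<longleftrightarrow> game_bijection n A m B g
     \<and> (\<forall>i<n. \<forall>s\<in>profiles n A. u i s = v (fst g i) (gb_apply n m g s))"

text \<open>Canonical (extensional) representatives of game bijections of a game to itself,
so that equality of group elements is equality of the underlying maps.\<close>

definition gb_extensional :: "nat \<Rightarrow> (nat \<Rightarrow> 's set) \<Rightarrow> ('s,'s) gbij \<Rightarrow> bool" where
  "gb_extensional n A g \<longleftrightarrow> fst g \<in> extensional {..<n} \<and> snd g \<in> extensional {..<n}
     \<and> (\<forall>i<n. snd g i \<in> extensional (A i))"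

definition automorphisms ::
  "nat \<Rightarrow> (nat \<Rightarrow> 's set) \<Rightarrow> (nat \<Rightarrow> (nat \<Rightarrow> 's) \<Rightarrow> real) \<Rightarrow> ('s,'s) gbij set" where
  "automorphisms n A u = {g. strict_iso n A u n A u g \<and> gb_extensional n A g}"

definition gb_id :: "nat \<Rightarrow> (nat \<Rightarrow> 's set) \<Rightarrow> ('s,'s) gbij" where
  "gb_id n A = ((\<lambda>i\<in>{..<n}. i), (\<lambda>i\<in>{..<n}. \<lambda>x\<in>A i. x))"

definition gb_comp :: "nat \<Rightarrow> (nat \<Rightarrow> 's set) \<Rightarrow> ('s,'s) gbij \<Rightarrow> ('s,'s) gbij \<Rightarrow> ('s,'s) gbij" where
  "gb_comp n A g h = ((\<lambda>i\<in>{..<n}. fst g (fst h i)),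
                      (\<lambda>i\<in>{..<n}. \<lambda>x\<in>A i. snd g (fst h i) (snd h i x)))"

definition gb_inv :: "nat \<Rightarrow> (nat \<Rightarrow> 's set) \<Rightarrow> ('s,'s) gbij \<Rightarrow> ('s,'s) gbij" where
  "gb_inv n A g = ((\<lambda>j\<in>{..<n}. the_inv_into {..<n} (fst g) j),
     (\<lambda>j\<in>{..<n}. \<lambda>y\<in>A j.
        the_inv_into (A (the_inv_into {..<n} (fst g) j)) (snd g (the_inv_into {..<n} (fst g) j)) y))"

definition symmetry_group ::
  "nat \<Rightarrow> (nat \<Rightarrow> 's set) \<Rightarrow> (nat \<Rightarrow> (nat \<Rightarrow> 's) \<Rightarrow> real) \<Rightarrow> ('s,'s) gbij set \<Rightarrow> bool" where
  "symmetry_group n A u G \<longleftrightarrow> G \<subseteq> automorphisms n A u \<and> gb_id n A \<in> G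
     \<and> (\<forall>g\<in>G. \<forall>h\<in>G. gb_comp n A g h \<in> G) \<and> (\<forall>g\<in>G. gb_inv n A g \<in> G)"

definition player_n_transitive :: "nat \<Rightarrow> ('s,'s) gbij set \<Rightarrow> bool" where
  "player_n_transitive n G \<longleftrightarrow>
     (\<forall>p. bij_betw p {..<n} {..<n} \<longrightarrow> (\<exists>g\<in>G. \<forall>i<n. fst g i = p i))"

definition strategy_trivial :: "nat \<Rightarrow> (nat \<Rightarrow> 's set) \<Rightarrow> ('s,'s) gbij set \<Rightarrow> bool" where
  "strategy_trivial n A G \<longleftrightarrow>
     (\<forall>i<n. \<forall>g\<in>G. fst g i = i \<longrightarrow> (\<forall>x\<in>A i. snd g i x = x))"

definition vnm_symmetric :: "nat \<Rightarrow> (nat \<Rightarrow> 't set) \<Rightarrow> (nat \<Rightarrow> (nat \<Rightarrow> 't) \<Rightarrow> real) \<Rightarrow> bool" where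
  "vnm_symmetric n B v \<longleftrightarrow> game n B v \<and> (\<forall>i<n. \<forall>j<n. B i = B j)
     \<and> (\<forall>p. bij_betw p {..<n} {..<n} \<longrightarrow>
          (\<forall>i<n. \<forall>s\<in>profiles n B. v (p i) s = v i (\<lambda>j\<in>{..<n}. s (p j))))"

end

theory Submission
  imports Defs
begin

lemma aut_facts:
  assumes "symmetry_group n A u G" "g \<in> G"
  shows "bij_betw (fst g) {..<n} {..<n}"
    and "\<And>i. i<n \<Longrightarrow> bij_betw (snd g i) (A i) (A (fst g i))"
    and "\<And>i s. i<n \<Longrightarrow> s \<in> profiles n A \<Longrightarrow> u i s = u (fst g i) (gb_apply n n g s)"
  using assms unfolding symmetry_group_def automorphisms_def strict_iso_def game_bijection_def
  by auto

theorem mainTheorem16: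
  fixes n :: nat and A :: "nat \<Rightarrow> 's set" and u :: "nat \<Rightarrow> (nat \<Rightarrow> 's) \<Rightarrow> real"
    and G :: "('s,'s) gbij set"
  assumes "game n A u"
    and "symmetry_group n A u G"
    and "player_n_transitive n G"
    and "strategy_trivial n A G"
  shows "\<exists>(B :: nat \<Rightarrow> 's set) v g. vnm_symmetric n B v \<and> strict_iso n A u n B v g"
proof -
  note SG = assms(2)
  have n0: "0 < n" using assms(1) unfolding game_def by auto
  have ex: "\<exists>g\<in>G. fst g 0 = i" if "i < n" for i
  proof -
    define p where "p = (\<lambda>k::nat. if k = 0 then i else if k = i then 0 else k)"
    have pp: "p (p k) = k" for k unfolding p_def by auto
    have "bij_betw p {..<n} {..<n}"
      by (rule bij_betw_byWitness[where f'=p]) (auto simp: pp, auto simp: p_def that n0)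
    then obtain g where "g \<in> G" "\<forall>k<n. fst g k = p k"
      using assms(3) unfolding player_n_transitive_def by blast
    then show ?thesis using n0 unfolding p_def by (metis (full_types))
  qed
  then obtain gg where gg: "\<And>i. i<n \<Longrightarrow> gg i \<in> G \<and> fst (gg i) 0 = i" by metis
  define \<sigma> where "\<sigma> i = snd (gg i) 0" for i
  have sbij: "bij_betw (\<sigma> i) (A 0) (A i)" if "i < n" for i
    using aut_facts(2)[OF SG, of "gg i" 0] gg[OF that] n0 unfolding \<sigma>_def by auto
  have key: "snd h i (\<sigma> i x) = \<sigma> (fst h i) x" if h: "h \<in> G" and i: "i < n" and x: "x \<in> A 0" for h i x
  proof -
    define c where "c = gb_comp n A h (gg i)"
    have cG: "c \<in> G" using SG h gg[OF i] unfolding c_def symmetry_group_def by auto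
    define k where "k = fst h i"
    have k: "k < n" using aut_facts(1)[OF SG h] i unfolding k_def bij_betw_def by auto
    have fc: "fst c 0 = k" using gg[OF i] n0 unfolding c_def gb_comp_def k_def by auto
    have sc: "snd c 0 x = snd h i (\<sigma> i x)" using gg[OF i] n0 x unfolding c_def gb_comp_def \<sigma>_def by auto
    define y where "y = snd c 0 x"
    have yA: "y \<in> A k" unfolding y_def sc k_def
      using bij_betwE[OF sbij[OF i]] x bij_betwE[OF aut_facts(2)[OF SG h i]] by blast
    define d where "d = gb_comp n A (gb_inv n A (gg k)) c"
    have dG: "d \<in> G" using SG cG gg[OF k] unfolding d_def symmetry_group_def by auto
    have inj: "inj_on (fst (gg k)) {..<n}" using aut_facts(1)[OF SG] gg[OF k] bij_betw_def by blast
    have ti: "the_inv_into {..<n} (fst (gg k)) k = 0"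
      using the_inv_into_f_f[OF inj, of 0] gg[OF k] n0 by auto
    have fd: "fst d 0 = 0" using n0 k unfolding d_def gb_comp_def gb_inv_def by (simp add: fc ti)
    have sd: "snd d 0 x = the_inv_into (A 0) (\<sigma> k) y"
      using n0 k x yA unfolding d_def gb_comp_def gb_inv_def \<sigma>_def y_def by (simp add: fc ti)
    have "snd d 0 x = x" using assms(4) dG fd x n0 unfolding strategy_trivial_def by auto
    then have "the_inv_into (A 0) (\<sigma> k) y = x" using sd by simp
    then have "y = \<sigma> k x" using f_the_inv_into_f_bij_betw[OF sbij[OF k] yA] by simp
    then show ?thesis using sc unfolding y_def k_def by simp
  qed
  define \<tau> where "\<tau> i = the_inv_into (A 0) (\<sigma> i)" for i
  define B where "B = (\<lambda>i::nat. A 0)"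
  define v where "v j t = u j (\<lambda>k\<in>{..<n}. \<sigma> k (t k))" for j t
  define g0 where "g0 = ((\<lambda>i::nat. i), \<tau>)"
  have tbij: "bij_betw (\<tau> i) (A i) (A 0)" if "i<n" for i
    unfolding \<tau>_def by (rule bij_betw_the_inv_into[OF sbij[OF that]])
  have ga: "gb_apply n n g0 s = (\<lambda>j\<in>{..<n}. \<tau> j (s j))" for s
  proof -
    have "the_inv_into {..<n} (\<lambda>i. i) j = j" if "j < n" for j
      using the_inv_into_f_f[of "\<lambda>i. i" "{..<n}" j] that by auto
    then show ?thesis unfolding gb_apply_def g0_def by (auto simp: fun_eq_iff)
  qed
  have iso: "strict_iso n A u n B v g0"
    unfolding strict_iso_def game_bijection_def
  proof (intro conjI allI impI ballI)
    show "bij_betw (fst g0) {..<n} {..<n}" unfolding g0_def by (simp add: bij_betw_def)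
    show "bij_betw (snd g0 i) (A i) (B (fst g0 i))" if "i<n" for i
      using tbij[OF that] unfolding g0_def B_def by simp
    fix i s assume i: "i<n" and s: "s \<in> profiles n A"
    have "(\<lambda>k\<in>{..<n}. \<sigma> k ((\<lambda>j\<in>{..<n}. \<tau> j (s j)) k)) = s"
    proof
      fix k
      show "(\<lambda>k\<in>{..<n}. \<sigma> k ((\<lambda>j\<in>{..<n}. \<tau> j (s j)) k)) k = s k"
      proof (cases "k < n")
        case True
        then have "s k \<in> A k" using s unfolding profiles_def by auto
        then show ?thesis using True f_the_inv_into_f_bij_betw[OF sbij[OF True]] unfolding \<tau>_def by simp
      next
        case False
        then show ?thesis using s unfolding profiles_def by (auto simp: PiE_def extensional_def)
      qed
    qed
    then have "v i (gb_apply n n g0 s) = u i s"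
      unfolding v_def ga by simp
    moreover have "fst g0 i = i" unfolding g0_def by simp
    ultimately show "u i s = v (fst g0 i) (gb_apply n n g0 s)" by simp
  qed
  have vnm: "vnm_symmetric n B v"
    unfolding vnm_symmetric_def
  proof (intro conjI allI impI ballI)
    have fa: "n \<ge> 2 \<and> finite (A 0) \<and> A 0 \<noteq> {}" using assms(1) n0 unfolding game_def by blast
    then show "game n B v" unfolding game_def B_def by simp
    show "B i = B j" for i j unfolding B_def by simp
    fix p i t assume p: "bij_betw p {..<n} {..<n}" and i: "i<n" and t: "t \<in> profiles n B"
    obtain h where h: "h \<in> G" "\<forall>k<n. fst h k = p k"
      using assms(3) p unfolding player_n_transitive_def by blast
    have tA: "t k \<in> A 0" if "k<n" for k using t that unfolding profiles_def B_def by auto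
    have pk: "p k < n" if "k<n" for k using p that bij_betwE by blast
    define s where "s = (\<lambda>k\<in>{..<n}. \<sigma> k (t (p k)))"
    have sP: "s \<in> profiles n A" unfolding profiles_def s_def
      using bij_betwE[OF sbij] tA pk by auto
    have bh: "bij_betw (fst h) {..<n} {..<n}" using aut_facts(1)[OF SG h(1)] .
    have "gb_apply n n h s = (\<lambda>j\<in>{..<n}. \<sigma> j (t j))"
    proof
      fix j
      show "gb_apply n n h s j = (\<lambda>j\<in>{..<n}. \<sigma> j (t j)) j"
      proof (cases "j<n")
        case True
        define k where "k = the_inv_into {..<n} (fst h) j"
        have k: "k < n" "fst h k = j"
          using bij_betw_the_inv_into[OF bh] True f_the_inv_into_f_bij_betw[OF bh] unfolding k_def
          by (auto dest: bij_betwE)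
        have "gb_apply n n h s j = snd h k (s k)" using True unfolding gb_apply_def k_def by (simp add: Let_def)
        also have "\<dots> = snd h k (\<sigma> k (t (p k)))" using k unfolding s_def by simp
        also have "\<dots> = \<sigma> j (t j)" using key[OF h(1) k(1) tA[OF pk[OF k(1)]]] k h(2) by simp
        finally show ?thesis using True by simp
      next
        case False then show ?thesis unfolding gb_apply_def by simp
      qed
    qed
    have "v i (\<lambda>j\<in>{..<n}. t (p j)) = u i s" unfolding v_def s_def
      by (intro arg_cong[where f="u i"] restrict_ext) simp
    also have "\<dots> = u (fst h i) (gb_apply n n h s)" using aut_facts(3)[OF SG h(1) i sP] .
    also have "\<dots> = v (p i) t" unfolding v_def using h(2) i
      by (simp add: \<open>gb_apply n n h s = _\<close>)
    finally show "v (p i) t = v i (\<lambda>j\<in>{..<n}. t (p j))" by simp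
  qed
  show ?thesis using vnm iso by blast
qed

end
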